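(* In the fixed design setting below, let $0<\gamma<1/\|K_n\|$ and $t\ge2$ an integer. Then $$\mathbb E\,R(\breve f_{\gamma,t})\le c_t\,\mathbb E\,R(\bar f_{1/(\gamma t)}),\qquad c_t=4\Big(1+\frac1{t-1}\Big)^2\le16,$$ where the expectation is over the noise.
   Context: Fixed design: fixed inputs $x_1,\dots,x_n\in\mathcal X=\mathbb R^d$, outputs $y_i=f_*(x_i)+\epsilon_i$ with $f_*$ fixed and $\epsilon_i$ i.i.d. with zero mean and variance $\sigma^2$. $K$ is a positive definite kernel with RKHS $\mathcal H$, $(K_n)_{ij}=K(x_i,x_j)$, $Y=(y_1,\dots,y_n)$. Expected risk $\mathcal E(f)=\mathbb E\frac1n\sum_{i=1}^n(f(x_i)-y_i)^2$, excess risk $R(f)=\mathcal E(f)-\inf_{v\in\mathcal H}\mathcal E(v)$. KRLS: $\bar f_\lambda(x)=\sum_i(\bar\alpha_\lambda)_iK(x,x_i)$, $\bar\alpha_\lambda=(K_n+\lambda nI_n)^{-1}Y$. Early stopping (Landweber): $\breve\alpha_0=0$, $\breve\alpha_t=\breve\alpha_{t-1}-\frac\gamma n(K_n\breve\alpha_{t-1}-Y)$, $\breve f_{\gamma,t}(x)=\sum_i(\breve\alpha_t)_iK(x_i,x)$. *)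

theory Defs
  imports "HOL-Probability.Probability"
begin

text \<open>Positive definite kernel (machine-learning convention: symmetric and
  every Gram quadratic form is nonnegative).\<close>
definition pd_kernel :: "('a \<Rightarrow> 'a \<Rightarrow> real) \<Rightarrow> bool" where
  "pd_kernel K \<longleftrightarrow> (\<forall>x y. K x y = K y x) \<and>
     (\<forall>ps :: ('a \<times> real) list.
        0 \<le> (\<Sum>(z,a)\<leftarrow>ps. \<Sum>(z',b)\<leftarrow>ps. a * b * K z z'))"

definition kexp_eval :: "('a \<Rightarrow> 'a \<Rightarrow> real) \<Rightarrow> ('a \<times> real) list \<Rightarrow> 'a \<Rightarrow> real" where
  "kexp_eval K ps x = (\<Sum>(z,a)\<leftarrow>ps. a * K x z)"

definition kexp_sqnorm :: "('a \<Rightarrow> 'a \<Rightarrow> real) \<Rightarrow> ('a \<times> real) list \<Rightarrow> real" where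
  "kexp_sqnorm K ps = (\<Sum>(z,a)\<leftarrow>ps. \<Sum>(z',b)\<leftarrow>ps. a * b * K z z')"

text \<open>RKHS of K (Moore--Aronszajn construction): pointwise limits of sequences of
  finite kernel expansions that are Cauchy in the pre-Hilbert norm.\<close>
definition RKHS :: "('a \<Rightarrow> 'a \<Rightarrow> real) \<Rightarrow> ('a \<Rightarrow> real) set" where
  "RKHS K = {f. \<exists>r :: nat \<Rightarrow> ('a \<times> real) list.
      (\<forall>e>0. \<exists>N. \<forall>k\<ge>N. \<forall>m\<ge>N.
          kexp_sqnorm K (r k @ map (\<lambda>(z,a). (z, - a)) (r m)) < e) \<and>
      (\<forall>x. (\<lambda>k. kexp_eval K (r k) x) \<longlonglongrightarrow> f x)}"

definition gram :: "('a \<Rightarrow> 'a \<Rightarrow> real) \<Rightarrow> ('n::finite \<Rightarrow> 'a) \<Rightarrow> real^'n^'n" where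
  "gram K x = (\<chi> i j. K (x i) (x j))"

primrec landweber :: "real^'n^'n \<Rightarrow> real^'n \<Rightarrow> real \<Rightarrow> nat \<Rightarrow> real^('n::finite)" where
  "landweber Kn Y \<gamma> 0 = 0"
| "landweber Kn Y \<gamma> (Suc t) =
     landweber Kn Y \<gamma> t - (\<gamma> / real CARD('n)) *\<^sub>R (Kn *v landweber Kn Y \<gamma> t - Y)"

definition krls :: "real^'n^'n \<Rightarrow> real^'n \<Rightarrow> real \<Rightarrow> real^('n::finite)" where
  "krls Kn Y lam = matrix_inv (Kn + (lam * real CARD('n)) *\<^sub>R mat 1) *v Y"

definition outputs :: "('n::finite \<Rightarrow> 'a) \<Rightarrow> ('a \<Rightarrow> real) \<Rightarrow> ('n \<Rightarrow> 'w \<Rightarrow> real) \<Rightarrow> 'w \<Rightarrow> real^'n" where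
  "outputs x fstar eps \<omega> = (\<chi> i. fstar (x i) + eps i \<omega>)"

definition expected_risk :: "'w measure \<Rightarrow> ('n::finite \<Rightarrow> 'a) \<Rightarrow> ('a \<Rightarrow> real) \<Rightarrow> ('n \<Rightarrow> 'w \<Rightarrow> real)
     \<Rightarrow> ('a \<Rightarrow> real) \<Rightarrow> real" where
  "expected_risk M x fstar eps f =
     (\<integral>\<omega>. (1 / real CARD('n)) * (\<Sum>i\<in>UNIV. (f (x i) - (fstar (x i) + eps i \<omega>))\<^sup>2) \<partial>M)"

definition excess_risk :: "'w measure \<Rightarrow> ('a \<Rightarrow> 'a \<Rightarrow> real) \<Rightarrow> ('n::finite \<Rightarrow> 'a) \<Rightarrow> ('a \<Rightarrow> real)
     \<Rightarrow> ('n \<Rightarrow> 'w \<Rightarrow> real) \<Rightarrow> ('a \<Rightarrow> real) \<Rightarrow> real" where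
  "excess_risk M K x fstar eps f =
     expected_risk M x fstar eps f - (INF v\<in>RKHS K. expected_risk M x fstar eps v)"

end

theory Submission
  imports Defs
begin


lemma spectral_sub:
  fixes G :: "real^'n::finite^'n"
  assumes sym: "\<And>v w. (G *v v) \<bullet> w = v \<bullet> (G *v w)"
  shows "subspace S \<Longrightarrow> (\<forall>v\<in>S. G *v v \<in> S) \<Longrightarrow> \<exists>B. B \<subseteq> S \<and> finite B \<and> (\<forall>b\<in>B. norm b = 1)
     \<and> pairwise orthogonal B \<and> span B = S \<and> (\<forall>b\<in>B. \<exists>\<mu>. G *v b = \<mu> *\<^sub>R b)"
proof (induction "dim S" arbitrary: S rule: less_induct)
  case less
  note subS = less(2) and invS = less(3)
  show ?case
  proof (cases "S = {0}")
    case True then show ?thesis by (intro exI[of _ "{}"]) auto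
  next
    case False
    then obtain s where s: "s \<in> S" "s \<noteq> 0" using subS subspace_0 by blast
    define T where "T = S \<inter> sphere 0 1"
    have cT: "compact T" unfolding T_def
      using closed_subspace[OF subS] by (simp add: closed_Int_compact)
    have "s /\<^sub>R norm s \<in> T" unfolding T_def using s subS
      by (simp add: subspace_scale)
    then have neT: "T \<noteq> {}" by blast
    have cont: "continuous_on T (\<lambda>v. v \<bullet> (G *v v))"
      by (intro continuous_intros linear_continuous_on matrix_vector_mul_linear) 
    obtain v where vT: "v \<in> T" and vmax: "\<forall>y\<in>T. y \<bullet> (G *v y) \<le> v \<bullet> (G *v v)"
      using continuous_attains_sup[OF cT neT cont] by blast
    have vS: "v \<in> S" and nv: "norm v = 1" using vT unfolding T_def by auto
    have vv: "v \<bullet> v = 1" using nv by (simp add: norm_eq_1)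
    define l where "l = v \<bullet> (G *v v)"
    have qscale: "(c *\<^sub>R z) \<bullet> (G *v (c *\<^sub>R z)) = c^2 * (z \<bullet> (G *v z))" for c z
      by (simp add: matrix_vector_mult_scaleR power2_eq_square)
    have max: "z \<bullet> (G *v z) \<le> l * (norm z)^2" if zS: "z \<in> S" for z
    proof (cases "z = 0")
      case True then show ?thesis by simp
    next
      case False
      have "z /\<^sub>R norm z \<in> T" unfolding T_def using zS False subS
        by (simp add: subspace_scale)
      then have "(z /\<^sub>R norm z) \<bullet> (G *v (z /\<^sub>R norm z)) \<le> l" using vmax l_def by blast
      moreover have "z /\<^sub>R norm z = (1/norm z) *\<^sub>R z" by (simp add: divide_inverse)
      ultimately have "(1/norm z)^2 * (z \<bullet> (G *v z)) \<le> l" using qscale[of "1/norm z" z] by simp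
      then show ?thesis using False by (simp add: field_simps power2_eq_square)
    qed
    have orth: "w \<bullet> (G *v v) = 0" if wS: "w \<in> S" and wv: "w \<bullet> v = 0" for w
    proof -
      define a where "a = w \<bullet> (G *v v)"
      define C where "C = w \<bullet> (G *v w) - l * (norm w)^2"
      have ineq: "2 * s * a + s^2 * C \<le> 0" for s
      proof -
        have zS: "v + s *\<^sub>R w \<in> S" using vS wS subS by (simp add: subspace_add subspace_scale)
        have q: "(v + s *\<^sub>R w) \<bullet> (G *v (v + s *\<^sub>R w)) = l + 2 * s * a + s^2 * (w \<bullet> (G *v w))"
          using sym[of v w] unfolding l_def a_def
          by (simp add: matrix_vector_right_distrib matrix_vector_mult_scaleR inner_add_left inner_add_right
               inner_commute[of v "G *v w"] inner_commute[of w "G *v v"] power2_eq_square algebra_simps)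
        have n: "(norm (v + s *\<^sub>R w))^2 = 1 + s^2 * (norm w)^2"
          using vv wv unfolding power2_norm_eq_inner by (simp add: inner_add_left inner_add_right inner_commute[of v w] power2_eq_square algebra_simps)
        show ?thesis using max[OF zS] q n unfolding C_def by (simp add: algebra_simps)
      qed
      define D where "D = 1 + \<bar>C\<bar>"
      have pos: "D > 0" unfolding D_def by simp
      have pos2: "2 * D + C > 0" unfolding D_def by (cases "C \<ge> 0") auto
      define s where "s = a / D"
      have "2 * s * a + s^2 * C = a^2 * (2 * D + C) / D^2"
        unfolding s_def using pos by (simp add: field_simps power2_eq_square)
      with ineq[of s] have "a^2 * (2 * D + C) / D^2 \<le> 0" by simp
      then have "a^2 * (2 * D + C) \<le> 0" using pos by (simp add: divide_le_0_iff)
      then have "a^2 \<le> 0" using pos2 by (simp add: mult_le_0_iff)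
      then show ?thesis unfolding a_def by simp
    qed
    have eig: "G *v v = l *\<^sub>R v"
    proof -
      define r where "r = G *v v - l *\<^sub>R v"
      have rS: "r \<in> S" unfolding r_def using invS vS subS by (simp add: subspace_diff subspace_scale)
      have rv: "r \<bullet> v = 0" unfolding r_def l_def using vv by (simp add: inner_diff_left inner_commute[of "G *v v" v])
      have "r \<bullet> (G *v v) = 0" using orth[OF rS rv] .
      have "r \<bullet> r = r \<bullet> (G *v v - l *\<^sub>R v)" by (simp add: r_def)
      also have "\<dots> = 0" using rv \<open>r \<bullet> (G *v v) = 0\<close> by (simp add: inner_diff_right)
      finally have "r = 0" by simp
      then show ?thesis unfolding r_def by simp
    qed
    define S' where "S' = {w \<in> S. w \<bullet> v = 0}"
    have subS': "subspace S'" unfolding S'_def subspace_def using subS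
      by (auto simp: subspace_def inner_add_left)
    have invS': "\<forall>w\<in>S'. G *v w \<in> S'"
    proof
      fix w assume "w \<in> S'"
      then have "w \<in> S" "w \<bullet> v = 0" unfolding S'_def by auto
      moreover have "(G *v w) \<bullet> v = w \<bullet> (G *v v)" using sym .
      ultimately show "G *v w \<in> S'" unfolding S'_def using invS eig by auto
    qed
    have "v \<notin> S'" unfolding S'_def using vv by auto
    moreover have "S' \<subseteq> S" unfolding S'_def by auto
    ultimately have "S' \<subset> S" using vS by blast
    then have "dim S' < dim S" using subS subS' by (metis dim_psubset span_eq_iff)
    from less(1)[OF this subS' invS'] obtain B' where B': "B' \<subseteq> S'" "finite B'" "\<forall>b\<in>B'. norm b = 1"
      "pairwise orthogonal B'" "span B' = S'" "\<forall>b\<in>B'. \<exists>\<mu>. G *v b = \<mu> *\<^sub>R b" by blast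
    show ?thesis
    proof (intro exI[of _ "insert v B'"] conjI)
      show "insert v B' \<subseteq> S" using B'(1) vS unfolding S'_def by auto
      show "finite (insert v B')" using B' by simp
      show "\<forall>b\<in>insert v B'. norm b = 1" using B' nv by auto
      show "pairwise orthogonal (insert v B')"
        using B'(1,4) unfolding pairwise_def S'_def orthogonal_def by (auto simp: inner_commute)
      show "\<forall>b\<in>insert v B'. \<exists>\<mu>. G *v b = \<mu> *\<^sub>R b" using B' eig by auto
      show "span (insert v B') = S"
      proof
        show "span (insert v B') \<subseteq> S"
          using \<open>insert v B' \<subseteq> S\<close> subS by (simp add: span_minimal)
        show "S \<subseteq> span (insert v B')"
        proof
          fix w assume wS: "w \<in> S"
          have "w - (w \<bullet> v) *\<^sub>R v \<in> S'" unfolding S'_def using wS vS subS vv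
            by (simp add: subspace_diff subspace_scale inner_diff_left)
          then have "w - (w \<bullet> v) *\<^sub>R v \<in> span (insert v B')"
            using B'(5) span_mono[of B' "insert v B'"] by auto
          moreover have "(w \<bullet> v) *\<^sub>R v \<in> span (insert v B')" by (simp add: span_base span_mul)
          ultimately have "(w - (w \<bullet> v) *\<^sub>R v) + (w \<bullet> v) *\<^sub>R v \<in> span (insert v B')" by (rule span_add)
          then show "w \<in> span (insert v B')" by simp
        qed
      qed
    qed
  qed
qed



lemma onb_delta:
  fixes B :: "(real^'n::finite) set"
  assumes "\<forall>b\<in>B. norm b = 1" "pairwise orthogonal B" "b \<in> B" "b' \<in> B"
  shows "b \<bullet> b' = (if b = b' then 1 else 0)"
  using assms unfolding pairwise_def orthogonal_def by (auto simp: norm_eq_1)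

lemma onb_coef:
  fixes B :: "(real^'n::finite) set"
  assumes "finite B" "\<forall>b\<in>B. norm b = 1" "pairwise orthogonal B" "b' \<in> B"
  shows "(\<Sum>b\<in>B. c b * (b \<bullet> b')) = c b'"
proof -
  have "(\<Sum>b\<in>B. c b * (b \<bullet> b')) = (\<Sum>b\<in>B. if b = b' then c b else 0)"
    using onb_delta[OF assms(2,3) _ assms(4)] by (intro sum.cong) auto
  then show ?thesis using assms(1,4) by simp
qed

lemma onb_expand:
  fixes B :: "(real^'n::finite) set"
  assumes "finite B" "\<forall>b\<in>B. norm b = 1" "pairwise orthogonal B" "span B = UNIV"
  shows "z = (\<Sum>b\<in>B. (z \<bullet> b) *\<^sub>R b)"
proof -
  define d where "d = z - (\<Sum>b\<in>B. (z \<bullet> b) *\<^sub>R b)"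
  have "orthogonal d y" if "y \<in> B" for y
  proof -
    have "d \<bullet> y = z \<bullet> y - (\<Sum>b\<in>B. (z \<bullet> b) * (b \<bullet> y))"
      unfolding d_def by (simp add: inner_diff_left inner_sum_left)
    also have "\<dots> = 0" using onb_coef[OF assms(1,2,3) that, of "\<lambda>b. z \<bullet> b"] by simp
    finally show ?thesis unfolding orthogonal_def .
  qed
  then have "orthogonal d d" using orthogonal_to_span[of d B d] assms(4) by auto
  then have "d = 0" by (simp add: orthogonal_def)
  then show ?thesis unfolding d_def by simp
qed

lemma onb_parseval:
  fixes B :: "(real^'n::finite) set"
  assumes "finite B" "\<forall>b\<in>B. norm b = 1" "pairwise orthogonal B" "span B = UNIV"
  shows "(norm z)^2 = (\<Sum>b\<in>B. (z \<bullet> b)^2)"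
proof -
  have "(norm z)^2 = z \<bullet> z" by (simp add: power2_norm_eq_inner)
  also have "\<dots> = z \<bullet> (\<Sum>b\<in>B. (z \<bullet> b) *\<^sub>R b)" using onb_expand[OF assms] by metis
  also have "\<dots> = (\<Sum>b\<in>B. (z \<bullet> b)^2)" by (simp add: inner_sum_right power2_eq_square)
  finally show ?thesis .
qed

lemma gram_sym:
  assumes "\<forall>a b. K a b = K b a"
  shows "(gram K x *v v) \<bullet> w = v \<bullet> (gram K x *v w)"
proof -
  have "(gram K x *v v) \<bullet> w = (\<Sum>i\<in>UNIV. \<Sum>j\<in>UNIV. K (x i) (x j) * v $ j * w $ i)"
    by (simp add: inner_vec_def matrix_vector_mult_def gram_def sum_distrib_right mult.assoc)
  also have "\<dots> = (\<Sum>j\<in>UNIV. \<Sum>i\<in>UNIV. K (x i) (x j) * v $ j * w $ i)" by (rule sum.swap)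
  also have "\<dots> = v \<bullet> (gram K x *v w)"
    using assms by (simp add: inner_vec_def matrix_vector_mult_def gram_def sum_distrib_left mult.assoc mult.left_commute)
  finally show ?thesis .
qed

lemma gram_psd:
  fixes x :: "'n::finite \<Rightarrow> 'a"
  assumes "pd_kernel K"
  shows "0 \<le> z \<bullet> (gram K x *v z)"
proof -
  obtain xs :: "'n list" where xs: "distinct xs" "set xs = UNIV"
    by (metis finite_class.finite_UNIV finite_distinct_list)
  define ps where "ps = map (\<lambda>i. (x i, z $ i)) xs"
  have "0 \<le> (\<Sum>(p,a)\<leftarrow>ps. \<Sum>(p',b)\<leftarrow>ps. a * b * K p p')"
    using assms unfolding pd_kernel_def by blast
  also have "(\<Sum>(p,a)\<leftarrow>ps. \<Sum>(p',b)\<leftarrow>ps. a * b * K p p') = (\<Sum>i\<leftarrow>xs. \<Sum>j\<leftarrow>xs. z $ i * z $ j * K (x i) (x j))"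
    unfolding ps_def by (simp add: o_def)
  also have "\<dots> = (\<Sum>i\<in>UNIV. \<Sum>j\<in>UNIV. z $ i * z $ j * K (x i) (x j))"
    using xs by (simp add: sum_list_distinct_conv_sum_set)
  also have "\<dots> = z \<bullet> (gram K x *v z)"
    by (simp add: inner_vec_def matrix_vector_mult_def gram_def sum_distrib_left mult_ac)
  finally show ?thesis .
qed

lemma scal_mat: "((lam::real) *\<^sub>R mat 1) *v (z::real^'n::finite) = lam *\<^sub>R z"
proof -
  have "(\<Sum>j\<in>UNIV. lam * (if i = j then 1 else 0) * z $ j) = lam * z $ i" for i
  proof -
    have "(\<Sum>j\<in>UNIV. lam * (if i = j then 1 else 0) * z $ j) = (\<Sum>j\<in>UNIV. if i = j then lam * z $ j else 0)"
      by (intro sum.cong) auto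
    then show ?thesis by simp
  qed
  then show ?thesis by (simp add: vec_eq_iff matrix_vector_mult_def mat_def)
qed

lemma landweber_resid:
  fixes G :: "real^'n::finite^'n"
  assumes sym: "\<And>v w. (G *v v) \<bullet> w = v \<bullet> (G *v w)" and eb: "G *v b = \<mu> *\<^sub>R b"
  shows "(Y - G *v landweber G Y \<gamma> t) \<bullet> b = (1 - \<gamma> / real CARD('n) * \<mu>)^t * (Y \<bullet> b)"
proof (induction t)
  case 0 then show ?case by simp
next
  case (Suc t)
  define a where "a = landweber G Y \<gamma> t"
  define c where "c = \<gamma> / real CARD('n)"
  define r where "r = Y - G *v a"
  have "Y - G *v landweber G Y \<gamma> (Suc t) = r - c *\<^sub>R (G *v r)"
    unfolding r_def a_def c_def by (simp add: algebra_simps)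
  then have "(Y - G *v landweber G Y \<gamma> (Suc t)) \<bullet> b = r \<bullet> b - c * ((G *v r) \<bullet> b)"
    by (simp add: inner_diff_left)
  also have "(G *v r) \<bullet> b = \<mu> * (r \<bullet> b)" using sym eb by simp
  also have "r \<bullet> b - c * (\<mu> * (r \<bullet> b)) = (1 - c * \<mu>) * (r \<bullet> b)" by (simp add: algebra_simps)
  also have "r \<bullet> b = (1 - c * \<mu>)^t * (Y \<bullet> b)" using Suc.IH unfolding r_def a_def c_def .
  finally show ?case unfolding c_def by simp
qed

lemma krls_eq:
  fixes G :: "real^'n::finite^'n"
  assumes psd: "\<And>z. 0 \<le> z \<bullet> (G *v z)" and lam: "lam > 0"
  shows "G *v (matrix_inv (G + lam *\<^sub>R mat 1) *v Y) + lam *\<^sub>R (matrix_inv (G + lam *\<^sub>R mat 1) *v Y) = Y"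
proof -
  define A where "A = G + lam *\<^sub>R mat 1"
  have Av: "A *v z = G *v z + lam *\<^sub>R z" for z
    unfolding A_def by (simp add: matrix_vector_mult_add_rdistrib scal_mat)
  have "\<forall>z. A *v z = 0 \<longrightarrow> z = 0"
  proof (intro allI impI)
    fix z assume "A *v z = 0"
    then have "z \<bullet> (G *v z) + lam * (z \<bullet> z) = 0" using Av[of z] by (metis inner_add_right inner_scaleR_right inner_zero_right)
    then have "lam * (z \<bullet> z) \<le> 0" using psd[of z] by linarith
    then have "z \<bullet> z \<le> 0" using lam by (simp add: mult_le_0_iff)
    then show "z = 0" by (metis inner_eq_zero_iff inner_ge_zero order_antisym)
  qed
  then have "invertible A" using matrix_left_invertible_ker invertible_left_inverse by blast
  then have "A ** matrix_inv A = mat 1" unfolding invertible_def matrix_inv_def by (rule someI_ex[THEN conjunct1])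
  then have "A *v (matrix_inv A *v Y) = Y" by (simp add: matrix_vector_mul_assoc)
  then show ?thesis using Av unfolding A_def by simp
qed

lemma scalar_ineq:
  fixes u c :: real and t :: nat
  assumes u: "0 \<le> u" "u \<le> 1" and c: "4 \<le> c"
  shows "((1 - u)^t)^2 \<le> c * (1 / (1 + t * u))^2"
    and "(1 - (1 - u)^t)^2 \<le> c * (1 - 1 / (1 + t * u))^2"
proof -
  have b1: "1 + t * u \<le> (1 + u)^t" using Bernoulli_inequality[of u t] u by simp
  have b2: "1 - t * u \<le> (1 - u)^t" using Bernoulli_inequality[of "-u" t] u by simp
  have p0: "0 \<le> (1 - u)^t" using u by simp
  have p1: "(1 - u)^t \<le> 1" using u by (simp add: power_le_one)
  have "u * u \<le> 1" using u by (simp add: mult_le_one)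
  then have "(1 - u)^t * (1 + u)^t \<le> 1"
    using u by (simp add: power_mult_distrib[symmetric] power_le_one algebra_simps)
  then have "(1 - u)^t * (1 + t * u) \<le> 1" using b1 p0
    by (meson mult_left_mono order_trans)
  moreover have pos: "1 + t * u > 0" using u by (simp add: add_pos_nonneg)
  ultimately have le1: "(1 - u)^t \<le> 1 / (1 + t * u)" by (simp add: field_simps)
  have "((1 - u)^t)^2 \<le> (1 / (1 + t * u))^2" using le1 p0 by (simp add: power_mono)
  also have "\<dots> \<le> c * (1 / (1 + t * u))^2" using c by (simp add: mult_le_cancel_right1)
  finally show "((1 - u)^t)^2 \<le> c * (1 / (1 + t * u))^2" .
  have eq: "1 - 1 / (1 + t * u) = t * u / (1 + t * u)" using pos by (simp add: field_simps)
  have "1 - (1 - u)^t \<le> 2 * (t * u / (1 + t * u))"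
  proof (cases "t * u \<le> 1")
    case True
    have tu0: "0 \<le> t * u" using u by simp
    have "t * u * (1 + t * u) \<le> t * u * 2" using True tu0 by (intro mult_left_mono) auto
    then have "t * u \<le> 2 * (t * u) / (1 + t * u)" using pos by (simp add: pos_le_divide_eq mult.commute)
    then show ?thesis using b2 by simp
  next
    case False
    then have "1 \<le> 2 * (t * u) / (1 + t * u)" using pos by (simp add: field_simps)
    then show ?thesis using p0 by simp
  qed
  moreover have "0 \<le> 1 - (1 - u)^t" using p1 by simp
  ultimately have "(1 - (1 - u)^t)^2 \<le> (2 * (t * u / (1 + t * u)))^2" by (simp add: power_mono)
  also have "\<dots> = 4 * (t * u / (1 + t * u))^2" by (simp add: power2_eq_square)
  also have "\<dots> \<le> c * (t * u / (1 + t * u))^2" using c by (simp add: mult_right_mono)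
  finally show "(1 - (1 - u)^t)^2 \<le> c * (1 - 1 / (1 + t * u))^2" using eq by simp
qed

lemma kexp_neg_zero:
  "kexp_sqnorm K (ps @ map (\<lambda>(z,a). (z, - a)) ps) = 0"
proof -
  define L where "L = ps @ map (\<lambda>(z,a). (z, - a)) ps"
  define h where "h = (\<lambda>(z::'a, a::real). \<Sum>(z',b)\<leftarrow>L. a * b * K z z')"
  have hz: "h (z, a) = a * (\<Sum>(z',b)\<leftarrow>L. b * K z z')" for z a
    unfolding h_def by (simp add: sum_list_const_mult[symmetric] split_def mult.assoc)
  have hneg: "h (z, - a) = - h (z, a)" for z a
    using hz[of z a] hz[of z "-a"] by simp
  have "sum_list (map h (map (\<lambda>(z,a). (z, - a)) qs)) = - sum_list (map h qs)" for qs
    by (induction qs) (auto simp: hneg)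
  then have "sum_list (map h L) = 0" unfolding L_def by simp
  then show ?thesis unfolding kexp_sqnorm_def L_def h_def by simp
qed



context prob_space begin

lemma sq_int_prod:
  fixes f g :: "'a \<Rightarrow> real"
  assumes [measurable]: "f \<in> borel_measurable M" "g \<in> borel_measurable M"
    and "integrable M (\<lambda>w. (f w)^2)" "integrable M (\<lambda>w. (g w)^2)"
  shows "integrable M (\<lambda>w. f w * g w)"
proof (rule Bochner_Integration.integrable_bound[where f="\<lambda>w. (f w)^2 + (g w)^2"])
  show "integrable M (\<lambda>w. (f w)^2 + (g w)^2)" using assms by simp
  show "(\<lambda>w. f w * g w) \<in> borel_measurable M" by simp
  show "AE w in M. norm (f w * g w) \<le> norm ((f w)^2 + (g w)^2)"
  proof (rule AE_I2)
    fix w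
    have "2 * \<bar>f w\<bar> * \<bar>g w\<bar> \<le> (f w)^2 + (g w)^2"
      using sum_squares_bound[of "\<bar>f w\<bar>" "\<bar>g w\<bar>"] by (simp add: power2_abs)
    moreover have "\<bar>f w\<bar> * \<bar>g w\<bar> \<ge> 0" by simp
    ultimately have "\<bar>f w\<bar> * \<bar>g w\<bar> \<le> (f w)^2 + (g w)^2" by linarith
    then show "norm (f w * g w) \<le> norm ((f w)^2 + (g w)^2)"
      by (simp add: abs_mult)
  qed
qed

lemma lincomb_props:
  fixes eps :: "'i \<Rightarrow> 'a \<Rightarrow> real" and c :: "'i \<Rightarrow> real"
  assumes fin: "finite I"
    and meas: "\<And>i. i \<in> I \<Longrightarrow> eps i \<in> borel_measurable M"
    and sq: "\<And>i. i \<in> I \<Longrightarrow> integrable M (\<lambda>w. (eps i w)^2)"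
    and mean: "\<And>i. i \<in> I \<Longrightarrow> (\<integral>w. eps i w \<partial>M) = 0"
  shows "integrable M (\<lambda>w. \<Sum>i\<in>I. c i * eps i w)"
    and "integrable M (\<lambda>w. (\<Sum>i\<in>I. c i * eps i w)^2)"
    and "(\<integral>w. (\<Sum>i\<in>I. c i * eps i w) \<partial>M) = 0"
proof -
  have int1: "integrable M (eps i)" if "i \<in> I" for i
    using square_integrable_imp_integrable[OF meas[OF that] sq[OF that]] .
  show "integrable M (\<lambda>w. \<Sum>i\<in>I. c i * eps i w)" using int1 by auto
  show "(\<integral>w. (\<Sum>i\<in>I. c i * eps i w) \<partial>M) = 0"
    using int1 mean by (simp add: integral_sum)
  have eq: "(\<lambda>w. (\<Sum>i\<in>I. c i * eps i w)^2) = (\<lambda>w. \<Sum>i\<in>I. \<Sum>j\<in>I. (c i * c j) * (eps i w * eps j w))"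
    by (rule ext) (simp add: power2_eq_square sum_product algebra_simps)
  have "integrable M (\<lambda>w. eps i w * eps j w)" if "i \<in> I" "j \<in> I" for i j
    using sq_int_prod[OF meas[OF that(1)] meas[OF that(2)] sq[OF that(1)] sq[OF that(2)]] .
  then show "integrable M (\<lambda>w. (\<Sum>i\<in>I. c i * eps i w)^2)" unfolding eq by auto
qed

lemma quad_expect:
  fixes e :: "'b \<Rightarrow> 'a \<Rightarrow> real"
  assumes fin: "finite B"
    and i1: "\<And>b. b \<in> B \<Longrightarrow> integrable M (e b)"
    and i2: "\<And>b. b \<in> B \<Longrightarrow> integrable M (\<lambda>w. (e b w)^2)"
    and m0: "\<And>b. b \<in> B \<Longrightarrow> (\<integral>w. e b w \<partial>M) = 0"
  shows "integrable M (\<lambda>w. \<Sum>b\<in>B. (p b * e b w - q b)^2)"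
    and "(\<integral>w. (\<Sum>b\<in>B. (p b * e b w - q b)^2) \<partial>M) = (\<Sum>b\<in>B. (p b)^2 * (\<integral>w. (e b w)^2 \<partial>M) + (q b)^2)"
proof -
  have eq: "(p b * e b w - q b)^2 = (p b)^2 * (e b w)^2 + (- 2 * p b * q b) * e b w + (q b)^2" for b w
    by (simp add: power2_eq_square algebra_simps)
  have ib: "integrable M (\<lambda>w. (p b * e b w - q b)^2)" if "b \<in> B" for b
    unfolding eq using i1[OF that] i2[OF that] by auto
  then show "integrable M (\<lambda>w. \<Sum>b\<in>B. (p b * e b w - q b)^2)" by auto
  have "(\<integral>w. (p b * e b w - q b)^2 \<partial>M) = (p b)^2 * (\<integral>w. (e b w)^2 \<partial>M) + (q b)^2" if "b \<in> B" for b
  proof -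
    have "(\<integral>w. (p b * e b w - q b)^2 \<partial>M) =
      (\<integral>w. (p b)^2 * (e b w)^2 \<partial>M) + (\<integral>w. (- 2 * p b * q b) * e b w \<partial>M) + (\<integral>w. (q b)^2 \<partial>M)"
      unfolding eq using i1[OF that] i2[OF that]
      by (simp add: integral_add[symmetric] integrable_add)
    also have "\<dots> = (p b)^2 * (\<integral>w. (e b w)^2 \<partial>M) + (q b)^2"
      using m0[OF that] prob_space by simp
    finally show ?thesis .
  qed
  then show "(\<integral>w. (\<Sum>b\<in>B. (p b * e b w - q b)^2) \<partial>M) = (\<Sum>b\<in>B. (p b)^2 * (\<integral>w. (e b w)^2 \<partial>M) + (q b)^2)"
    using ib by (simp add: integral_sum)
qed

end


theorem mainTheorem2:
  fixes M :: "'w measure"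
    and x :: "'n::finite \<Rightarrow> real^'d::finite"
    and fstar :: "real^'d \<Rightarrow> real"
    and eps :: "'n \<Rightarrow> 'w \<Rightarrow> real"
    and K :: "real^'d \<Rightarrow> real^'d \<Rightarrow> real"
    and \<sigma> \<gamma> :: real
    and t :: nat
  assumes "prob_space M"
    and "prob_space.indep_vars M (\<lambda>_. borel) eps UNIV"
    and "\<forall>i j. distr M borel (eps i) = distr M borel (eps j)"
    and "\<forall>i. integrable M (\<lambda>\<omega>. (eps i \<omega>)\<^sup>2)"
    and "\<forall>i. prob_space.expectation M (eps i) = 0"
    and "\<forall>i. prob_space.variance M (eps i) = \<sigma>\<^sup>2"
    and "pd_kernel K"
    and "0 < \<gamma>"
    and "\<gamma> * onorm (\<lambda>v. gram K x *v v) < 1"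
    and "2 \<le> t"
  shows "prob_space.expectation M (\<lambda>\<omega>. excess_risk M K x fstar eps
            (\<lambda>z. \<Sum>i\<in>UNIV. landweber (gram K x) (outputs x fstar eps \<omega>) \<gamma> t $ i * K (x i) z))
         \<le> 4 * (1 + 1 / (real t - 1))\<^sup>2 *
           prob_space.expectation M (\<lambda>\<omega>. excess_risk M K x fstar eps
            (\<lambda>z. \<Sum>i\<in>UNIV. krls (gram K x) (outputs x fstar eps \<omega>) (1 / (\<gamma> * real t)) $ i * K z (x i)))
       \<and> 4 * (1 + 1 / (real t - 1))\<^sup>2 \<le> 16"
proof -
  interpret P: prob_space M by fact
  note indep = assms(2) and sqi = assms(4) and mean0 = assms(5) and pd = assms(7)
    and gpos = assms(8) and gnorm = assms(9) and t2 = assms(10)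
  define nr where "nr = real CARD('n)"
  have nr1: "1 \<le> nr" unfolding nr_def by (simp add: Suc_le_eq)
  have nr0: "0 < nr" using nr1 by simp
  define G where "G = gram K x"
  have Ksym: "\<forall>a b. K a b = K b a" using pd unfolding pd_kernel_def by blast
  have sym: "\<And>v w. (G *v v) \<bullet> w = v \<bullet> (G *v w)" unfolding G_def using gram_sym[OF Ksym] .
  have psd: "\<And>z. 0 \<le> z \<bullet> (G *v z)" unfolding G_def using gram_psd[OF pd] .
  have meas: "\<And>i. eps i \<in> borel_measurable M"
    using indep unfolding P.indep_vars_def2 by auto
  have sq: "\<And>i. integrable M (\<lambda>w. (eps i w)^2)" using sqi by auto
  have mean: "\<And>i. (\<integral>w. eps i w \<partial>M) = 0" using mean0 by auto
  define ct where "ct = 4 * (1 + 1 / (real t - 1))\<^sup>2"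
  have t1: "1 \<le> real t - 1" using t2 by simp
  have ct4: "4 \<le> ct" unfolding ct_def using t1 by (simp add: zero_le_divide_iff)
  have ct16: "ct \<le> 16"
  proof -
    have "1 / (real t - 1) \<le> 1" using t1 by simp
    then have "(1 + 1 / (real t - 1))^2 \<le> 2^2" using t1
      by (intro power_mono) (auto simp: zero_le_divide_iff)
    then show ?thesis unfolding ct_def by simp
  qed
  define F where "F = (\<chi> i. fstar (x i))"
  define Ev where "Ev = (\<lambda>\<omega>. \<chi> i. eps i \<omega>)"
  have Yeq: "outputs x fstar eps \<omega> = F + Ev \<omega>" for \<omega>
    unfolding outputs_def F_def Ev_def by (simp add: vec_eq_iff)
  define pv where "pv = (\<lambda>f::real^'d \<Rightarrow> real. \<chi> i. f (x i))"
  define Cst where "Cst = (1 / nr) * (\<Sum>i\<in>UNIV. \<integral>w. (eps i w)^2 \<partial>M)"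
  have normsq: "(norm v)^2 = (\<Sum>i\<in>UNIV. (v $ i)^2)" for v :: "real^'n"
    unfolding power2_norm_eq_inner by (simp add: inner_vec_def power2_eq_square)
  have ER: "expected_risk M x fstar eps f = (1 / nr) * (norm (pv f - F))^2 + Cst" for f
  proof -
    have eq: "(f (x i) - (fstar (x i) + eps i w))^2 = (1 * eps i w - (f (x i) - fstar (x i)))^2" for i w
      by (simp add: power2_eq_square algebra_simps)
    have int1: "integrable M (eps i)" for i
      using P.square_integrable_imp_integrable[OF meas sq] .
    have "(\<integral>w. (\<Sum>i\<in>UNIV. (1 * eps i w - (f (x i) - fstar (x i)))^2) \<partial>M)
        = (\<Sum>i\<in>UNIV. 1^2 * (\<integral>w. (eps i w)^2 \<partial>M) + (f (x i) - fstar (x i))^2)"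
      using P.quad_expect(2)[of UNIV eps "\<lambda>_. 1" "\<lambda>i. f (x i) - fstar (x i)", OF _ int1 sq mean] by simp
    then show ?thesis
      unfolding expected_risk_def eq Cst_def nr_def[symmetric] normsq pv_def F_def
      by (simp add: sum.distrib algebra_simps add_divide_distrib)
  qed
  define I where "I = (INF v\<in>RKHS K. expected_risk M x fstar eps v)"
  have excess: "excess_risk M K x fstar eps f = (1 / nr) * (norm (pv f - F))^2 + Cst - I" for f
    unfolding excess_risk_def I_def ER by simp
  obtain B where B: "finite B" "\<forall>b\<in>B. norm b = 1" "pairwise orthogonal B" "span B = UNIV"
      "\<forall>b\<in>B. \<exists>\<mu>. G *v b = \<mu> *\<^sub>R b"
    using spectral_sub[OF sym, of UNIV] by auto
  obtain mu where mu: "\<forall>b\<in>B. G *v b = mu b *\<^sub>R b" using B(5) by metis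
  have bb: "b \<bullet> b = 1" if "b \<in> B" for b using B(2) that by (simp add: norm_eq_1)
  have mu_nn: "0 \<le> mu b" if "b \<in> B" for b
    using psd[of b] mu that bb[OF that] by simp
  have mu_le: "\<gamma> * mu b < 1" if "b \<in> B" for b
  proof -
    have "norm (G *v b) \<le> onorm (\<lambda>v. G *v v) * norm b"
      by (rule onorm) simp
    then have "mu b \<le> onorm (\<lambda>v. G *v v)" using mu that B(2) mu_nn[OF that] by simp
    then have "\<gamma> * mu b \<le> \<gamma> * onorm (\<lambda>v. G *v v)" using gpos by simp
    then show ?thesis using gnorm unfolding G_def by simp
  qed
  have Gb: "(G *v v) \<bullet> b = mu b * (v \<bullet> b)" if "b \<in> B" for b v
    using sym[of v b] mu that by simp
  define eb where "eb = (\<lambda>b \<omega>. \<Sum>i\<in>UNIV. b $ i * eps i \<omega>)"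
  have Evb: "Ev \<omega> \<bullet> b = eb b \<omega>" for b \<omega>
    unfolding Ev_def eb_def by (simp add: inner_vec_def mult.commute)
  have eb1: "integrable M (eb b)" and eb2: "integrable M (\<lambda>\<omega>. (eb b \<omega>)^2)"
    and eb0: "(\<integral>\<omega>. eb b \<omega> \<partial>M) = 0" for b
    using P.lincomb_props[of UNIV eps "\<lambda>i. b $ i", OF _ meas sq mean] unfolding eb_def by auto
  define V where "V = (\<lambda>b. \<integral>\<omega>. (eb b \<omega>)^2 \<partial>M)"
  have Vnn: "0 \<le> V b" for b unfolding V_def by simp
  have resid: "(norm (P - F))^2 = (\<Sum>b\<in>B. ((1 - \<rho> b) * eb b \<omega> - \<rho> b * (F \<bullet> b))^2)"
    if h: "\<And>b. b \<in> B \<Longrightarrow> (outputs x fstar eps \<omega> - P) \<bullet> b = \<rho> b * (outputs x fstar eps \<omega> \<bullet> b)"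
    for P \<rho> \<omega>
  proof -
    have "(P - F) \<bullet> b = (1 - \<rho> b) * eb b \<omega> - \<rho> b * (F \<bullet> b)" if "b \<in> B" for b
    proof -
      have "(P - F) \<bullet> b = Ev \<omega> \<bullet> b - (outputs x fstar eps \<omega> - P) \<bullet> b"
        unfolding Yeq by (simp add: inner_diff_left inner_add_left)
      also have "\<dots> = eb b \<omega> - \<rho> b * (F \<bullet> b + eb b \<omega>)"
        using h[OF that] unfolding Yeq by (simp add: Evb inner_add_left)
      finally show ?thesis by (simp add: algebra_simps)
    qed
    then show ?thesis using onb_parseval[OF B(1-4), of "P - F"] by simp
  qed
  define T where "T = (\<lambda>\<rho> b. (1 - \<rho> b)^2 * V b + (\<rho> b * (F \<bullet> b))^2)"
  have expect: "P.expectation (\<lambda>\<omega>. excess_risk M K x fstar eps (f \<omega>)) = (1 / nr) * (\<Sum>b\<in>B. T \<rho> b) + (Cst - I)"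
    if h: "\<And>\<omega> b. b \<in> B \<Longrightarrow> (outputs x fstar eps \<omega> - pv (f \<omega>)) \<bullet> b = \<rho> b * (outputs x fstar eps \<omega> \<bullet> b)"
    for f \<rho>
  proof -
    define Q where "Q = (\<lambda>\<omega>. \<Sum>b\<in>B. ((1 - \<rho> b) * eb b \<omega> - \<rho> b * (F \<bullet> b))^2)"
    have fe: "(\<lambda>\<omega>. excess_risk M K x fstar eps (f \<omega>)) = (\<lambda>\<omega>. (1 / nr) * Q \<omega> + (Cst - I))"
      by (rule ext) (simp add: excess resid[OF h] Q_def)
    have qi: "integrable M Q" and qv: "(\<integral>\<omega>. Q \<omega> \<partial>M) = (\<Sum>b\<in>B. T \<rho> b)"
      using P.quad_expect[of B eb "\<lambda>b. 1 - \<rho> b" "\<lambda>b. \<rho> b * (F \<bullet> b)", OF B(1) eb1 eb2 eb0]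
      unfolding Q_def T_def V_def by auto
    show ?thesis unfolding fe using qi qv P.prob_space by simp
  qed
  define \<rho>L where "\<rho>L = (\<lambda>b. (1 - \<gamma> / nr * mu b)^t)"
  have EL: "P.expectation (\<lambda>\<omega>. excess_risk M K x fstar eps
            (\<lambda>z. \<Sum>i\<in>UNIV. landweber (gram K x) (outputs x fstar eps \<omega>) \<gamma> t $ i * K (x i) z))
        = (1 / nr) * (\<Sum>b\<in>B. T \<rho>L b) + (Cst - I)"
  proof (rule expect)
    fix \<omega> b assume bB: "b \<in> B"
    define Y where "Y = outputs x fstar eps \<omega>"
    have "pv (\<lambda>z. \<Sum>i\<in>UNIV. landweber G Y \<gamma> t $ i * K (x i) z) = G *v landweber G Y \<gamma> t"
      unfolding pv_def G_def gram_def using Ksym by (simp add: vec_eq_iff matrix_vector_mult_def mult.commute)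
    then show "(outputs x fstar eps \<omega> - pv (\<lambda>z. \<Sum>i\<in>UNIV. landweber (gram K x) (outputs x fstar eps \<omega>) \<gamma> t $ i * K (x i) z)) \<bullet> b
        = \<rho>L b * (outputs x fstar eps \<omega> \<bullet> b)"
      using landweber_resid[OF sym, of b "mu b" Y \<gamma> t] mu bB
      unfolding Y_def G_def \<rho>L_def nr_def by simp
  qed
  define lam where "lam = 1 / (\<gamma> * real t) * nr"
  have lam0: "0 < lam" unfolding lam_def using gpos nr0 t2 by simp
  define \<rho>R where "\<rho>R = (\<lambda>b. lam / (mu b + lam))"
  have ER2: "P.expectation (\<lambda>\<omega>. excess_risk M K x fstar eps
            (\<lambda>z. \<Sum>i\<in>UNIV. krls (gram K x) (outputs x fstar eps \<omega>) (1 / (\<gamma> * real t)) $ i * K z (x i)))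
        = (1 / nr) * (\<Sum>b\<in>B. T \<rho>R b) + (Cst - I)"
  proof (rule expect)
    fix \<omega> b assume bB: "b \<in> B"
    define Y where "Y = outputs x fstar eps \<omega>"
    define \<beta> where "\<beta> = krls G Y (1 / (\<gamma> * real t))"
    have pvb: "pv (\<lambda>z. \<Sum>i\<in>UNIV. \<beta> $ i * K z (x i)) = G *v \<beta>"
      unfolding pv_def G_def gram_def by (simp add: vec_eq_iff matrix_vector_mult_def mult.commute)
    have keq: "G *v \<beta> + lam *\<^sub>R \<beta> = Y"
      using krls_eq[OF psd lam0, of Y] unfolding \<beta>_def krls_def lam_def nr_def by simp
    have yb: "Y \<bullet> b = (mu b + lam) * (\<beta> \<bullet> b)"
      using arg_cong[OF keq, of "\<lambda>v. v \<bullet> b"] Gb[OF bB] by (simp add: inner_add_left algebra_simps)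
    have "(Y - G *v \<beta>) \<bullet> b = lam * (\<beta> \<bullet> b)"
      using arg_cong[OF keq, of "\<lambda>v. v \<bullet> b"] by (simp add: inner_add_left inner_diff_left)
    also have "\<dots> = \<rho>R b * (Y \<bullet> b)"
      unfolding \<rho>R_def yb using mu_nn[OF bB] lam0 by (simp add: field_simps)
    finally show "(outputs x fstar eps \<omega> - pv (\<lambda>z. \<Sum>i\<in>UNIV. krls (gram K x) (outputs x fstar eps \<omega>) (1 / (\<gamma> * real t)) $ i * K z (x i))) \<bullet> b
        = \<rho>R b * (outputs x fstar eps \<omega> \<bullet> b)"
      using pvb unfolding Y_def \<beta>_def G_def by simp
  qed
  define zb where "zb = (\<lambda>b. if mu b = 0 then (F \<bullet> b)^2 else 0)"
  define S0 where "S0 = (\<Sum>b\<in>B. zb b)"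
  define \<beta>0 where "\<beta>0 = (\<Sum>b\<in>B. (if mu b = 0 then 0 else (F \<bullet> b) / mu b) *\<^sub>R b)"
  define v0 where "v0 = (\<lambda>z. \<Sum>i\<in>UNIV. \<beta>0 $ i * K z (x i))"
  have pv0: "pv v0 = G *v \<beta>0"
    unfolding pv_def v0_def G_def gram_def by (simp add: vec_eq_iff matrix_vector_mult_def mult.commute)
  have "(pv v0 - F) \<bullet> b = (if mu b = 0 then - (F \<bullet> b) else 0)" if bB: "b \<in> B" for b
  proof -
    have "\<beta>0 \<bullet> b = (if mu b = 0 then 0 else (F \<bullet> b) / mu b)"
      unfolding \<beta>0_def using onb_coef[OF B(1-3) bB, of "\<lambda>b. if mu b = 0 then 0 else (F \<bullet> b) / mu b"]
      by (simp add: inner_sum_left)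
    then show ?thesis unfolding pv0 using Gb[OF bB, of \<beta>0] by (simp add: inner_diff_left)
  qed
  then have "(\<Sum>b\<in>B. ((pv v0 - F) \<bullet> b)^2) = S0"
    unfolding S0_def zb_def by (intro sum.cong) auto
  then have ER0: "expected_risk M x fstar eps v0 = (1 / nr) * S0 + Cst"
    unfolding ER using onb_parseval[OF B(1-4), of "pv v0 - F"] by simp
  have v0R: "v0 \<in> RKHS K"
  proof -
    obtain xs :: "'n list" where xs: "distinct xs" "set xs = UNIV"
      by (metis finite_class.finite_UNIV finite_distinct_list)
    define ps where "ps = map (\<lambda>i. (x i, \<beta>0 $ i)) xs"
    have "kexp_eval K ps z = v0 z" for z
      unfolding kexp_eval_def ps_def v0_def using xs by (simp add: o_def sum_list_distinct_conv_sum_set)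
    then show ?thesis unfolding RKHS_def using kexp_neg_zero[of K ps]
      by (intro CollectI exI[of _ "\<lambda>k. ps"]) auto
  qed
  have bdd: "bdd_below ((\<lambda>v. expected_risk M x fstar eps v) ` RKHS K)"
    by (rule bdd_belowI2[of _ Cst]) (use nr0 in \<open>simp add: ER less_imp_le\<close>)
  have Ile: "I \<le> (1 / nr) * S0 + Cst"
    unfolding I_def using cINF_lower[OF bdd v0R] ER0 by simp
  have comp: "T \<rho>L b - zb b \<le> ct * (T \<rho>R b - zb b)" if bB: "b \<in> B" for b
  proof (cases "mu b = 0")
    case True
    then show ?thesis unfolding T_def \<rho>L_def \<rho>R_def zb_def using lam0 by simp
  next
    case False
    define u where "u = \<gamma> / nr * mu b"
    have u0: "0 \<le> u" unfolding u_def using gpos nr0 mu_nn[OF bB] by simp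
    have u1: "u \<le> 1"
    proof -
      have g0: "0 \<le> \<gamma> * mu b" using gpos mu_nn[OF bB] by simp
      have "\<gamma> * mu b * 1 \<le> \<gamma> * mu b * nr" by (rule mult_left_mono[OF nr1 g0])
      then have "\<gamma> * mu b / nr \<le> \<gamma> * mu b" using nr0 by (simp add: divide_le_eq)
      then have "u \<le> \<gamma> * mu b" unfolding u_def by simp
      then show ?thesis using mu_le[OF bB] by simp
    qed
    have rL: "\<rho>L b = (1 - u)^t" unfolding \<rho>L_def u_def ..
    have rR: "\<rho>R b = 1 / (1 + t * u)"
      unfolding \<rho>R_def u_def lam_def using gpos nr0 t2 mu_nn[OF bB] by (simp add: field_simps)
    note s = scalar_ineq[OF u0 u1 ct4, of t]
    have "(1 - \<rho>L b)^2 * V b \<le> ct * ((1 - \<rho>R b)^2 * V b)"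
      using mult_right_mono[OF s(2) Vnn[of b]] unfolding rL rR by (simp add: mult.assoc)
    moreover have "(\<rho>L b * (F \<bullet> b))^2 \<le> ct * ((\<rho>R b * (F \<bullet> b))^2)"
    proof -
      have "(1 / (1 + real t * u))^2 * (F \<bullet> b)^2 = (1 / (1 + real t * u) * (F \<bullet> b))^2"
        by (simp only: power_mult_distrib)
      then show ?thesis
        using mult_right_mono[OF s(1), of "(F \<bullet> b)^2"] unfolding rL rR
        by (simp only: power_mult_distrib mult.assoc) simp
    qed
    ultimately show ?thesis unfolding T_def zb_def using False by (simp add: algebra_simps)
  qed
  have "(\<Sum>b\<in>B. T \<rho>L b - zb b) \<le> (\<Sum>b\<in>B. ct * (T \<rho>R b - zb b))"
    using comp by (rule sum_mono)
  then have sumc: "(\<Sum>b\<in>B. T \<rho>L b) - S0 \<le> ct * ((\<Sum>b\<in>B. T \<rho>R b) - S0)"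
    unfolding S0_def by (simp add: sum_subtractf sum_distrib_left[symmetric])
  define SL where "SL = (\<Sum>b\<in>B. T \<rho>L b)"
  define SR where "SR = (\<Sum>b\<in>B. T \<rho>R b)"
  have D0: "0 \<le> (1 / nr) * S0 + (Cst - I)" using Ile by simp
  have "(1 / nr) * SL + (Cst - I) = (1 / nr) * (SL - S0) + ((1 / nr) * S0 + (Cst - I))"
    by (simp add: right_diff_distrib)
  also have "\<dots> \<le> (1 / nr) * (ct * (SR - S0)) + ct * ((1 / nr) * S0 + (Cst - I))"
  proof (rule add_mono)
    show "(1 / nr) * (SL - S0) \<le> (1 / nr) * (ct * (SR - S0))"
      using sumc nr0 unfolding SL_def SR_def by (simp add: divide_right_mono)
    show "(1 / nr) * S0 + (Cst - I) \<le> ct * ((1 / nr) * S0 + (Cst - I))"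
      using D0 ct4 by (simp add: mult_le_cancel_right1 mult_right_mono[of 1 ct])
  qed
  also have "\<dots> = ct * ((1 / nr) * SR + (Cst - I))" by (simp add: algebra_simps)
  finally have main: "(1 / nr) * SL + (Cst - I) \<le> ct * ((1 / nr) * SR + (Cst - I))" .
  show ?thesis
    using main ct16 unfolding EL ER2 SL_def SR_def ct_def by simp
qed

end
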